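(* Let $\mathcal I=(i_-,i_+)\subseteq\mathbb R$, let $X$ have an absolutely continuous density $f$ with $f>0$ on $\mathcal I$, distribution function $F(x)=\int_{i_-}^x f(y)\,dy$, median $\bar x$ ($F(\bar x)=1/2$), and let $K(x)=F(x)/f(x)$ for $x\le\bar x$, $K(x)=(1-F(x))/f(x)$ for $x\ge\bar x$. Then for every $1\le p<\infty$ and every smooth $\phi$ on $\mathcal I$ with $\phi(\bar x)=0$ and $E[|\phi(X)|^p]<\infty$, $$E\big[|\phi(X)|^p\big]\le p^p\,E\big[K(X)^p|\phi'(X)|^p\big].$$ *)

theory Defs
  imports "HOL-Analysis.Analysis"
begin

definition ointerval :: "ereal \<Rightarrow> ereal \<Rightarrow> real set" where
  "ointerval a b = {x. a < ereal x \<and> ereal x < b}"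

definition smooth_on :: "(real \<Rightarrow> real) \<Rightarrow> real set \<Rightarrow> bool" where
  "smooth_on g S \<longleftrightarrow> (\<forall>k. \<forall>x\<in>S. ((deriv ^^ k) g) differentiable (at x))"

definition cdf_of :: "(real \<Rightarrow> real) \<Rightarrow> real \<Rightarrow> real" where
  "cdf_of f x = (LINT y:{..x}|lborel. f y)"

definition Kfun :: "(real \<Rightarrow> real) \<Rightarrow> real \<Rightarrow> real \<Rightarrow> real" where
  "Kfun f m x = (if x \<le> m then cdf_of f x / f x else (1 - cdf_of f x) / f x)"

end

theory Submission
  imports Defs
begin


lemma ftc_abs_bound:
  fixes F F' G :: "real \<Rightarrow> real"
  assumes "c \<le> d" "\<And>t. t \<in> {c..d} \<Longrightarrow> (F has_real_derivative F' t) (at t)"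
    "\<And>t. t \<in> {c..d} \<Longrightarrow> \<bar>F' t\<bar> \<le> G t" "continuous_on {c..d} G"
  shows "\<bar>F d - F c\<bar> \<le> integral {c..d} G"
proof -
  have "(F' has_integral (F d - F c)) {c..d}"
    apply (rule fundamental_theorem_of_calculus[OF assms(1)])
    using assms(2) by (simp add: has_real_derivative_iff_has_vector_derivative has_vector_derivative_at_within)
  hence "norm (integral {c..d} F') \<le> integral {c..d} G"
    by (intro integral_norm_bound_integral) (auto intro: integrable_continuous_interval assms simp: has_integral_integrable)
  thus ?thesis using \<open>(F' has_integral (F d - F c)) {c..d}\<close> by (simp add: integral_unique)
qed



lemma deriv_abs_powr:
  fixes p s :: real
  assumes "1 < p"
  shows "((\<lambda>t. \<bar>t\<bar> powr p) has_real_derivative (p * \<bar>s\<bar> powr (p - 1) * sgn s)) (at s)"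
proof (cases "s > 0")
  case True
  have "((\<lambda>t. t powr p) has_real_derivative (p * s powr (p - 1))) (at s)"
    using True by (rule has_real_derivative_powr)
  hence "((\<lambda>t. t powr p) has_real_derivative (p * \<bar>s\<bar> powr (p - 1) * sgn s)) (at s)"
    using True by simp
  then show ?thesis
  proof (rule has_field_derivative_transform_within_open[where S="{0<..}"])
    show "s \<in> {0<..}" using True by simp
  qed auto
next
  case False
  show ?thesis
  proof (cases "s < 0")
    case True
    have d1: "((\<lambda>z. z powr p) has_real_derivative p * (-s) powr (p-1)) (at (-s))"
      by (rule has_real_derivative_powr) (use True in simp)
    have d2: "((\<lambda>t. -t) has_real_derivative -1) (at s)"
      using DERIV_minus[OF DERIV_ident, of s UNIV] by simp
    have "((\<lambda>t. (-t) powr p) has_real_derivative (p * (-s) powr (p - 1) * (-1))) (at s)"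
      using DERIV_chain2[OF d1 d2] by simp
    hence "((\<lambda>t. (-t) powr p) has_real_derivative (p * \<bar>s\<bar> powr (p - 1) * sgn s)) (at s)"
      using True by simp
    then show ?thesis
    proof (rule has_field_derivative_transform_within_open[where S="{..<0}"])
      show "s \<in> {..<0}" using True by simp
    qed auto
  next
    case False
    with \<open>\<not> s > 0\<close> have s: "s = 0" by simp
    have "((\<lambda>h. \<bar>h\<bar> powr (p - 1)) \<longlongrightarrow> 0) (at 0)"
    proof (rule tendsto_zero_powrI)
      show "((\<lambda>h::real. \<bar>h\<bar>) \<longlongrightarrow> 0) (at 0)"
        using tendsto_rabs[OF tendsto_ident_at[of 0 UNIV]] by simp
    qed (use assms in auto)
    hence "((\<lambda>h. \<bar>\<bar>h\<bar> powr p / h\<bar>) \<longlongrightarrow> 0) (at (0::real))"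
    proof (rule Lim_transform_eventually)
      have "\<bar>x\<bar> powr (p - 1) = \<bar>\<bar>x\<bar> powr p / x\<bar>" if "x \<noteq> 0" for x :: real
      proof -
        have "\<bar>\<bar>x\<bar> powr p / x\<bar> = \<bar>x\<bar> powr p / \<bar>x\<bar>" by (simp add: abs_divide)
        also have "\<dots> = \<bar>x\<bar> powr p / \<bar>x\<bar> powr 1" using that by simp
        also have "\<dots> = \<bar>x\<bar> powr (p - 1)" by (simp only: powr_diff)
        finally show ?thesis by simp
      qed
      thus "\<forall>\<^sub>F x in at 0. \<bar>x\<bar> powr (p - 1) = \<bar>\<bar>x\<bar> powr p / x\<bar>"
        by (simp add: eventually_at_filter)
    qed
    hence "((\<lambda>h. \<bar>h\<bar> powr p / h) \<longlongrightarrow> 0) (at (0::real))"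
      by (simp only: tendsto_rabs_zero_iff)
    then show ?thesis using s assms by (simp add: DERIV_def)
  qed
qed


lemma young_pt:
  fixes p a b h :: real
  assumes "1 \<le> p" "0 \<le> a" "0 \<le> b" "h = (if p = 1 then 1 else a powr (p - 1))"
  shows "p * h * b \<le> (p - 1) / p * a powr p + p powr (p - 1) * b powr p"
proof (cases "p = 1")
  case True then show ?thesis using assms by simp
next
  case False
  hence p: "p > 1" using assms by simp
  show ?thesis
  proof (cases "a = 0 \<or> b = 0")
    case True then show ?thesis using assms p by auto
  next
    case False
    hence ab: "a > 0" "b > 0" using assms by auto
    have "(a powr p) powr ((p - 1) / p) * ((p * b) powr p) powr (1 / p)
       \<le> (p - 1) / p * a powr p + 1 / p * (p * b) powr p"
      using p ab by (intro Youngs_inequality_0) (auto simp: field_simps)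
    moreover have "(a powr p) powr ((p - 1) / p) = a powr (p - 1)"
      using p by (simp add: powr_powr)
    moreover have "((p * b) powr p) powr (1 / p) = p * b"
      using p ab by (simp add: powr_powr)
    moreover have "1 / p * (p * b) powr p = p powr (p - 1) * b powr p"
      using p ab by (simp add: powr_mult powr_diff field_simps)
    ultimately show ?thesis using assms False p by (simp add: algebra_simps)
  qed
qed






theorem mainTheorem9:
  fixes a b :: ereal and f \<phi> :: "real \<Rightarrow> real" and m p :: real
  assumes "a < b"
    and f_meas: "f \<in> borel_measurable lborel"
    and f_pos: "\<forall>x\<in>ointerval a b. f x > 0"
    and f_zero: "\<forall>x. x \<notin> ointerval a b \<longrightarrow> f x = 0"
    and f_int: "integrable lborel f"
    and f_total: "(LINT x|lborel. f x) = 1"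
    and median: "m \<in> ointerval a b" "cdf_of f m = 1 / 2"
    and p: "1 \<le> p"
    and smooth: "smooth_on \<phi> (ointerval a b)"
    and phi_m: "\<phi> m = 0"
    and finite_moment: "(\<integral>\<^sup>+ x\<in>ointerval a b. ennreal (\<bar>\<phi> x\<bar> powr p * f x) \<partial>lborel) < \<infinity>"
  shows "(\<integral>\<^sup>+ x\<in>ointerval a b. ennreal (\<bar>\<phi> x\<bar> powr p * f x) \<partial>lborel)
       \<le> ennreal (p powr p) *
         (\<integral>\<^sup>+ x\<in>ointerval a b. ennreal (Kfun f m x powr p * \<bar>deriv \<phi> x\<bar> powr p * f x) \<partial>lborel)"
proof -
  define I where "I = ointerval a b"
  have I_open: "open I"
  proof -
    have "I = ereal -` {a<..<b}" by (auto simp: I_def ointerval_def)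
    thus ?thesis by (auto intro!: open_vimage continuous_intros)
  qed
  have I_borel[measurable]: "I \<in> sets borel" using I_open by auto
  have I_conv: "y \<in> I" if "x \<in> I" "z \<in> I" "x \<le> y" "y \<le> z" for x y z
  proof -
    have e1: "ereal x \<le> ereal y" and e2: "ereal y \<le> ereal z" using that by auto
    have "a < ereal x" "ereal z < b" using that unfolding I_def ointerval_def by auto
    hence "a < ereal y" "ereal y < b" using less_le_trans[OF _ e1] le_less_trans[OF e2] by auto
    thus ?thesis unfolding I_def ointerval_def by auto
  qed
  have f_nn: "0 \<le> f x" for x using f_pos f_zero unfolding I_def by (metis less_eq_real_def)
  have diff: "\<phi> differentiable (at x)" if "x \<in> I" for x
    using smooth that unfolding smooth_on_def I_def by (metis funpow_0)
  have diff': "deriv \<phi> differentiable (at x)" if "x \<in> I" for x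
  proof -
    have "(deriv ^^ 1) \<phi> = deriv \<phi>" by simp
    thus ?thesis using smooth that unfolding smooth_on_def I_def by metis
  qed
  have phi_der: "(\<phi> has_real_derivative deriv \<phi> x) (at x)" if "x \<in> I" for x
    using diff[OF that] by (simp add: DERIV_deriv_iff_real_differentiable)
  have phi_cont: "continuous_on I \<phi>"
    using diff by (meson continuous_at_imp_continuous_on differentiable_imp_continuous_within)
  have phi'_cont: "continuous_on I (deriv \<phi>)"
    using diff' by (meson continuous_at_imp_continuous_on differentiable_imp_continuous_within)
  have phiI_meas[measurable]: "(\<lambda>x. indicator I x * \<phi> x) \<in> borel_measurable borel"
    using borel_measurable_continuous_on_indicator[OF I_borel phi_cont] by simp
  have phi'I_meas[measurable]: "(\<lambda>x. indicator I x * deriv \<phi> x) \<in> borel_measurable borel"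
    using borel_measurable_continuous_on_indicator[OF I_borel phi'_cont] by simp
  define F where "F = cdf_of f"
  have int_ind: "integrable lborel (\<lambda>x. f x * indicator A x)" if "A \<in> sets borel" for A
    using integrable_mult_indicator[of A lborel f] that f_int by (simp add: mult.commute)
  have F_alt: "F y = (\<integral>x. f x * indicator {..y} x \<partial>lborel)" for y
    unfolding F_def cdf_of_def set_lebesgue_integral_def by (simp add: mult.commute)
  have nnF: "(\<integral>\<^sup>+x. ennreal (f x) * indicator {..y} x \<partial>lborel) = ennreal (F y)" for y
  proof -
    have "(\<integral>\<^sup>+x. ennreal (f x) * indicator {..y} x \<partial>lborel) = (\<integral>\<^sup>+x. ennreal (f x * indicator {..y} x) \<partial>lborel)"
      by (intro nn_integral_cong) (auto simp: indicator_def)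
    also have "\<dots> = ennreal (F y)" unfolding F_alt
      by (intro nn_integral_eq_integral int_ind) (auto simp: f_nn)
    finally show ?thesis .
  qed
  have nnF': "(\<integral>\<^sup>+x. ennreal (f x) * indicator {y..} x \<partial>lborel) = ennreal (1 - F y)" for y
  proof -
    have "(\<integral>\<^sup>+x. ennreal (f x) * indicator {y..} x \<partial>lborel) = (\<integral>\<^sup>+x. ennreal (f x * indicator {y<..} x) \<partial>lborel)"
      by (intro nn_integral_cong_AE, use AE_lborel_singleton[of y] in eventually_elim)
         (auto simp: indicator_def)
    also have "\<dots> = ennreal (\<integral>x. f x * indicator {y<..} x \<partial>lborel)"
      by (intro nn_integral_eq_integral int_ind) (auto simp: f_nn)
    also have "(\<integral>x. f x * indicator {y<..} x \<partial>lborel) = 1 - F y"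
    proof -
      have "(\<integral>x. f x \<partial>lborel) = (\<integral>x. f x * indicator {..y} x + f x * indicator {y<..} x \<partial>lborel)"
        by (rule arg_cong[where f="integral\<^sup>L lborel"]) (auto simp: indicator_def fun_eq_iff)
      also have "\<dots> = F y + (\<integral>x. f x * indicator {y<..} x \<partial>lborel)"
        unfolding F_alt by (rule Bochner_Integration.integral_add; rule int_ind; simp)
      finally show ?thesis using f_total by simp
    qed
    finally show ?thesis .
  qed
  have F_mono: "mono F"
  proof
    fix x y :: real assume "x \<le> y"
    thus "F x \<le> F y" unfolding F_alt
      by (intro Bochner_Integration.integral_mono int_ind) (auto simp: indicator_def f_nn)
  qed
  have F_meas[measurable]: "F \<in> borel_measurable borel" using F_mono by (rule borel_measurable_mono)
  have F_nn: "0 \<le> F x" for x unfolding F_alt by (auto intro!: integral_nonneg_AE simp: f_nn)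
  have F_le1: "F x \<le> 1" for x
  proof -
    have "F x \<le> (\<integral>y. f y \<partial>lborel)" unfolding F_alt
      by (intro Bochner_Integration.integral_mono int_ind f_int) (auto simp: indicator_def f_nn)
    thus ?thesis using f_total by simp
  qed

  have f_meas'[measurable]: "f \<in> borel_measurable borel" using f_meas by simp
  have mI: "m \<in> I" using median unfolding I_def by simp
  have fI0: "f x = 0" if "x \<notin> I" for x using f_zero that unfolding I_def by simp
  have fIpos: "f x > 0" if "x \<in> I" for x using f_pos that unfolding I_def by simp
  have Fm: "F m = 1/2" using median unfolding F_def by simp
  have K_eq: "Kfun f m x = (if x \<le> m then F x / f x else (1 - F x) / f x)" for x
    by (simp add: Kfun_def F_def)
  have K_meas[measurable]: "Kfun f m \<in> borel_measurable borel"
    unfolding K_eq[abs_def] by measurable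
  have K_nn: "0 \<le> Kfun f m x" for x
    using F_nn[of x] F_le1[of x] f_nn[of x] unfolding K_eq by auto
  have Kf: "Kfun f m y * f y = (if y \<le> m then F y else 1 - F y)" if "y \<in> I" for y
    using fIpos[OF that] unfolding K_eq by auto
  define \<phi>I where "\<phi>I = (\<lambda>x. indicator I x * \<phi> x)"
  define \<phi>'I where "\<phi>'I = (\<lambda>x. indicator I x * deriv \<phi> x)"
  have [measurable]: "\<phi>I \<in> borel_measurable borel" "\<phi>'I \<in> borel_measurable borel"
    unfolding \<phi>I_def \<phi>'I_def by (rule phiI_meas phi'I_meas)+
  define \<psi> where "\<psi> = (\<lambda>x. \<bar>\<phi> x\<bar> powr p)"
  define hh where "hh = (\<lambda>x. if p = 1 then 1 else \<bar>\<phi> x\<bar> powr (p - 1))"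
  define g where "g = (\<lambda>x. p * hh x * \<bar>deriv \<phi> x\<bar>)"
  define gI where "gI = (\<lambda>x. p * (if p = 1 then 1 else \<bar>\<phi>I x\<bar> powr (p - 1)) * \<bar>\<phi>'I x\<bar>)"
  have gI_meas[measurable]: "gI \<in> borel_measurable borel" unfolding gI_def by measurable
  have gI_eq: "gI x = (if x \<in> I then g x else 0)" for x
    unfolding gI_def g_def hh_def \<phi>I_def \<phi>'I_def by (auto simp: indicator_def)
  have g_nn: "0 \<le> g x" for x unfolding g_def hh_def using p by auto
  have gI_nn: "0 \<le> gI x" for x unfolding gI_eq using g_nn by auto
  have g_cont: "continuous_on I g"
  proof (cases "p = 1")
    case True
    then show ?thesis unfolding g_def hh_def using phi'_cont by (auto intro!: continuous_intros)
  next
    case False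
    have "continuous_on I (\<lambda>x. \<bar>\<phi> x\<bar> powr (p - 1))"
      using False p by (intro continuous_on_powr') (auto intro!: continuous_intros phi_cont)
    then show ?thesis unfolding g_def hh_def using phi'_cont False by (auto intro!: continuous_intros)
  qed
  define \<Phi> where "\<Phi> = (\<lambda>x. if p = 1 then \<phi> x else \<bar>\<phi> x\<bar> powr p)"
  define \<Phi>' where "\<Phi>' = (\<lambda>x. if p = 1 then deriv \<phi> x else p * \<bar>\<phi> x\<bar> powr (p - 1) * sgn (\<phi> x) * deriv \<phi> x)"
  have \<Phi>_der: "(\<Phi> has_real_derivative \<Phi>' x) (at x)" if "x \<in> I" for x
  proof (cases "p = 1")
    case True
    then show ?thesis unfolding \<Phi>_def \<Phi>'_def using phi_der[OF that] by simp
  next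
    case False
    hence "1 < p" using p by simp
    from DERIV_chain2[OF deriv_abs_powr[OF this, of "\<phi> x"] phi_der[OF that]]
    show ?thesis unfolding \<Phi>_def \<Phi>'_def using False by simp
  qed
  have \<Phi>'_bd: "\<bar>\<Phi>' x\<bar> \<le> g x" for x
  proof (cases "p = 1")
    case True
    then show ?thesis unfolding \<Phi>'_def g_def hh_def by simp
  next
    case False
    have "\<bar>\<Phi>' x\<bar> = p * \<bar>\<phi> x\<bar> powr (p - 1) * \<bar>sgn (\<phi> x)\<bar> * \<bar>deriv \<phi> x\<bar>"
      unfolding \<Phi>'_def using False p by (simp add: abs_mult)
    also have "\<dots> \<le> p * \<bar>\<phi> x\<bar> powr (p - 1) * 1 * \<bar>deriv \<phi> x\<bar>"
      using p by (intro mult_right_mono mult_left_mono) (auto simp: sgn_real_def)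
    finally show ?thesis unfolding g_def hh_def using False by simp
  qed
  have \<psi>_eq: "\<psi> x = \<bar>\<Phi> x - \<Phi> m\<bar>" for x
  proof (cases "p = 1")
    case True thus ?thesis unfolding \<psi>_def \<Phi>_def using phi_m by simp
  next
    case False
    have "\<Phi> x - \<Phi> m = \<bar>\<phi> x\<bar> powr p - \<bar>\<phi> m\<bar> powr p"
      unfolding \<Phi>_def using False by (simp only: if_False)
    also have "\<dots> = \<psi> x" unfolding \<psi>_def phi_m by (simp only: abs_zero powr_0 diff_zero)
    finally show ?thesis by (simp only: abs_of_nonneg[OF powr_ge_zero] \<psi>_def)
  qed
  have FT: "\<bar>\<Phi> d - \<Phi> c\<bar> \<le> integral {c..d} g" if "c \<in> I" "d \<in> I" "c \<le> d" for c d
  proof -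
    have sub: "{c..d} \<subseteq> I" using I_conv[OF that(1) that(2)] by auto
    show ?thesis
    proof (rule ftc_abs_bound[OF \<open>c \<le> d\<close>])
      fix t assume "t \<in> {c..d}" thus "(\<Phi> has_real_derivative \<Phi>' t) (at t)" using sub \<Phi>_der by blast
    next
      fix t show "\<bar>\<Phi>' t\<bar> \<le> g t" by (rule \<Phi>'_bd)
    next
      show "continuous_on {c..d} g" by (rule continuous_on_subset[OF g_cont sub])
    qed
  qed
  have int_eq: "ennreal (integral {c..d} g) = (\<integral>\<^sup>+y. ennreal (gI y) * indicator {c..d} y \<partial>lborel)"
    if "c \<in> I" "d \<in> I" "c \<le> d" for c d
  proof -
    have sub: "{c..d} \<subseteq> I" using I_conv[OF that(1) that(2)] by auto
    have "(g has_integral integral {c..d} g) {c..d}"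
      using continuous_on_subset[OF g_cont sub] by (intro integrable_integral integrable_continuous_interval)
    from nn_integral_has_integral_lebesgue[OF _ this] g_nn
    have "integral\<^sup>N lborel (\<lambda>x. ennreal (indicator {c..d} x * g x)) = ennreal (integral {c..d} g)"
      by simp
    moreover have "(\<integral>\<^sup>+y. ennreal (gI y) * indicator {c..d} y \<partial>lborel) = integral\<^sup>N lborel (\<lambda>x. ennreal (indicator {c..d} x * g x))"
      using sub by (intro nn_integral_cong) (auto simp: indicator_def gI_eq)
    ultimately show ?thesis by simp
  qed
  have PB1: "ennreal (\<psi> x) \<le> (\<integral>\<^sup>+y. ennreal (gI y) * indicator {m..x} y \<partial>lborel)" if "x \<in> I" "m \<le> x" for x
    unfolding int_eq[OF mI that(1) that(2), symmetric] \<psi>_eq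
    using FT[OF mI that(1) that(2)] by (intro ennreal_leI) simp
  have PB2: "ennreal (\<psi> x) \<le> (\<integral>\<^sup>+y. ennreal (gI y) * indicator {x..m} y \<partial>lborel)" if "x \<in> I" "x \<le> m" for x
    unfolding int_eq[OF that(1) mI that(2), symmetric] \<psi>_eq
    using FT[OF that(1) mI that(2)] by (intro ennreal_leI) (simp add: abs_minus_commute)

  define A where "A = (\<integral>\<^sup>+x. ennreal (\<bar>\<phi>I x\<bar> powr p * f x) \<partial>lborel)"
  define B where "B = (\<integral>\<^sup>+x. ennreal (Kfun f m x powr p * \<bar>\<phi>'I x\<bar> powr p * f x) \<partial>lborel)"
  have A_eq: "(\<integral>\<^sup>+ x\<in>ointerval a b. ennreal (\<bar>\<phi> x\<bar> powr p * f x) \<partial>lborel) = A"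
    unfolding A_def I_def[symmetric]
    by (intro nn_integral_cong) (auto simp: indicator_def \<phi>I_def fI0)
  have B_eq: "(\<integral>\<^sup>+ x\<in>ointerval a b. ennreal (Kfun f m x powr p * \<bar>deriv \<phi> x\<bar> powr p * f x) \<partial>lborel) = B"
    unfolding B_def I_def[symmetric]
    by (intro nn_integral_cong) (auto simp: indicator_def \<phi>'I_def fI0)
  have A_fin: "A < \<infinity>" using finite_moment A_eq by simp
  define T1 where "T1 = (\<lambda>x y. ennreal (f x) * ennreal (gI y) * (if m \<le> y \<and> y \<le> x then 1 else 0))"
  define T2 where "T2 = (\<lambda>x y. ennreal (f x) * ennreal (gI y) * (if x < m \<and> x \<le> y \<and> y \<le> m then 1 else 0))"
  have T1_meas[measurable]: "case_prod T1 \<in> borel_measurable (lborel \<Otimes>\<^sub>M lborel)"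
    unfolding T1_def by measurable
  have T2_meas[measurable]: "case_prod T2 \<in> borel_measurable (lborel \<Otimes>\<^sub>M lborel)"
    unfolding T2_def by measurable
  have S1: "ennreal (\<bar>\<phi>I x\<bar> powr p * f x) \<le> (\<integral>\<^sup>+y. T1 x y \<partial>lborel) + (\<integral>\<^sup>+y. T2 x y \<partial>lborel)" for x
  proof (cases "x \<in> I")
    case False then show ?thesis by (simp add: fI0)
  next
    case True
    have L: "ennreal (\<bar>\<phi>I x\<bar> powr p * f x) = ennreal (f x) * ennreal (\<psi> x)"
      using True f_nn[of x] by (simp add: \<phi>I_def \<psi>_def ennreal_mult'' mult.commute)
    show ?thesis
    proof (cases "m \<le> x")
      case True
      have "(\<integral>\<^sup>+y. T1 x y \<partial>lborel) = (\<integral>\<^sup>+y. ennreal (f x) * (ennreal (gI y) * indicator {m..x} y) \<partial>lborel)"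
        unfolding T1_def by (intro nn_integral_cong) (auto simp: indicator_def mult_ac)
      also have "\<dots> = ennreal (f x) * (\<integral>\<^sup>+y. ennreal (gI y) * indicator {m..x} y \<partial>lborel)"
        by (rule nn_integral_cmult) measurable
      finally have "ennreal (\<bar>\<phi>I x\<bar> powr p * f x) \<le> (\<integral>\<^sup>+y. T1 x y \<partial>lborel)"
        unfolding L using PB1[OF \<open>x \<in> I\<close> True] by (auto intro: mult_left_mono)
      then show ?thesis by (rule add_increasing2[rotated]) simp
    next
      case False
      have "(\<integral>\<^sup>+y. T2 x y \<partial>lborel) = (\<integral>\<^sup>+y. ennreal (f x) * (ennreal (gI y) * indicator {x..m} y) \<partial>lborel)"
        unfolding T2_def using False by (intro nn_integral_cong) (auto simp: indicator_def)
      also have "\<dots> = ennreal (f x) * (\<integral>\<^sup>+y. ennreal (gI y) * indicator {x..m} y \<partial>lborel)"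
        by (rule nn_integral_cmult) measurable
      finally have "ennreal (\<bar>\<phi>I x\<bar> powr p * f x) \<le> (\<integral>\<^sup>+y. T2 x y \<partial>lborel)"
        unfolding L using PB2[OF \<open>x \<in> I\<close>] False by (auto intro: mult_left_mono)
      then show ?thesis by (rule add_increasing[rotated]) simp
    qed
  qed
  have S2: "A \<le> (\<integral>\<^sup>+x. \<integral>\<^sup>+y. T1 x y \<partial>lborel \<partial>lborel) + (\<integral>\<^sup>+x. \<integral>\<^sup>+y. T2 x y \<partial>lborel \<partial>lborel)"
  proof -
    have "A \<le> (\<integral>\<^sup>+x. (\<integral>\<^sup>+y. T1 x y \<partial>lborel) + (\<integral>\<^sup>+y. T2 x y \<partial>lborel) \<partial>lborel)"
      unfolding A_def by (intro nn_integral_mono S1)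
    also have "\<dots> = (\<integral>\<^sup>+x. \<integral>\<^sup>+y. T1 x y \<partial>lborel \<partial>lborel) + (\<integral>\<^sup>+x. \<integral>\<^sup>+y. T2 x y \<partial>lborel \<partial>lborel)"
      by (rule nn_integral_add) measurable
    finally show ?thesis .
  qed
  define E1 where "E1 = (\<lambda>y. ennreal (gI y) * (if m \<le> y then 1 else 0) * ennreal (1 - F y))"
  define E2 where "E2 = (\<lambda>y. ennreal (gI y) * (if y \<le> m then 1 else 0) * ennreal (F y))"
  have S4: "(\<integral>\<^sup>+x. T1 x y \<partial>lborel) = E1 y" for y
  proof -
    have "(\<integral>\<^sup>+x. T1 x y \<partial>lborel) = (\<integral>\<^sup>+x. (ennreal (gI y) * (if m \<le> y then 1 else 0)) * (ennreal (f x) * indicator {y..} x) \<partial>lborel)"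
      unfolding T1_def by (intro nn_integral_cong) (auto simp: indicator_def mult_ac)
    also have "\<dots> = (ennreal (gI y) * (if m \<le> y then 1 else 0)) * (\<integral>\<^sup>+x. ennreal (f x) * indicator {y..} x \<partial>lborel)"
      by (rule nn_integral_cmult) measurable
    finally show ?thesis unfolding E1_def nnF' .
  qed
  have S5: "(\<integral>\<^sup>+x. T2 x y \<partial>lborel) \<le> E2 y" for y
  proof -
    have "(\<integral>\<^sup>+x. T2 x y \<partial>lborel) \<le> (\<integral>\<^sup>+x. (ennreal (gI y) * (if y \<le> m then 1 else 0)) * (ennreal (f x) * indicator {..y} x) \<partial>lborel)"
      unfolding T2_def by (intro nn_integral_mono) (auto simp: indicator_def mult_ac)
    also have "\<dots> = (ennreal (gI y) * (if y \<le> m then 1 else 0)) * (\<integral>\<^sup>+x. ennreal (f x) * indicator {..y} x \<partial>lborel)"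
      by (rule nn_integral_cmult) measurable
    finally show ?thesis unfolding E2_def nnF .
  qed
  have [measurable]: "E1 \<in> borel_measurable borel" "E2 \<in> borel_measurable borel"
    unfolding E1_def E2_def by measurable
  have S6: "A \<le> (\<integral>\<^sup>+y. E1 y + E2 y \<partial>lborel)"
  proof -
    have "A \<le> (\<integral>\<^sup>+y. \<integral>\<^sup>+x. T1 x y \<partial>lborel \<partial>lborel) + (\<integral>\<^sup>+y. \<integral>\<^sup>+x. T2 x y \<partial>lborel \<partial>lborel)"
      using S2 lborel_pair.Fubini'[OF T1_meas] lborel_pair.Fubini'[OF T2_meas] by simp
    also have "\<dots> \<le> (\<integral>\<^sup>+y. E1 y \<partial>lborel) + (\<integral>\<^sup>+y. E2 y \<partial>lborel)"
      using S4 S5 by (intro add_mono nn_integral_mono) auto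
    also have "\<dots> = (\<integral>\<^sup>+y. E1 y + E2 y \<partial>lborel)"
      by (rule nn_integral_add[symmetric]) measurable
    finally show ?thesis .
  qed
  have S7: "(\<integral>\<^sup>+y. E1 y + E2 y \<partial>lborel) = (\<integral>\<^sup>+y. ennreal (gI y * (Kfun f m y * f y)) \<partial>lborel)"
  proof (rule nn_integral_cong_AE)
    show "AE y in lborel. E1 y + E2 y = ennreal (gI y * (Kfun f m y * f y))"
      using AE_lborel_singleton[of m]
    proof eventually_elim
      case (elim y)
      show ?case
      proof (cases "y \<in> I")
        case False then show ?thesis unfolding E1_def E2_def gI_eq by simp
      next
        case True
        show ?thesis
        proof (cases "m < y")
          case True
          then show ?thesis using Kf[OF \<open>y \<in> I\<close>] gI_nn[of y] F_le1[of y]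
            unfolding E1_def E2_def by (simp add: ennreal_mult'')
        next
          case False
          then show ?thesis using Kf[OF \<open>y \<in> I\<close>] gI_nn[of y] F_nn[of y] elim
            unfolding E1_def E2_def by (simp add: ennreal_mult'')
        qed
      qed
    qed
  qed
  define c where "c = (p - 1) / p"
  define d where "d = p powr (p - 1)"
  have c_nn: "0 \<le> c" using p unfolding c_def by simp
  have d_nn: "0 \<le> d" unfolding d_def by simp
  have S8: "ennreal (gI y * (Kfun f m y * f y)) \<le>
      ennreal c * ennreal (\<bar>\<phi>I y\<bar> powr p * f y) + ennreal d * ennreal (Kfun f m y powr p * \<bar>\<phi>'I y\<bar> powr p * f y)" for y
  proof (cases "y \<in> I")
    case False then show ?thesis by (simp add: gI_eq)
  next
    case True
    have bnn: "0 \<le> Kfun f m y * \<bar>deriv \<phi> y\<bar>" using K_nn[of y] by simp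
    have Y: "p * hh y * (Kfun f m y * \<bar>deriv \<phi> y\<bar>) \<le> c * \<bar>\<phi> y\<bar> powr p + d * (Kfun f m y * \<bar>deriv \<phi> y\<bar>) powr p"
      unfolding c_def d_def by (rule young_pt[OF p _ bnn]) (auto simp: hh_def)
    have "gI y * (Kfun f m y * f y) = (p * hh y * (Kfun f m y * \<bar>deriv \<phi> y\<bar>)) * f y"
      using True by (simp add: gI_eq g_def)
    also have "\<dots> \<le> (c * \<bar>\<phi> y\<bar> powr p + d * (Kfun f m y * \<bar>deriv \<phi> y\<bar>) powr p) * f y"
      by (rule mult_right_mono[OF Y f_nn])
    also have "\<dots> = c * (\<bar>\<phi>I y\<bar> powr p * f y) + d * (Kfun f m y powr p * \<bar>\<phi>'I y\<bar> powr p * f y)"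
      using True K_nn[of y] by (simp add: \<phi>I_def \<phi>'I_def powr_mult algebra_simps)
    finally have R: "gI y * (Kfun f m y * f y) \<le> c * (\<bar>\<phi>I y\<bar> powr p * f y) + d * (Kfun f m y powr p * \<bar>\<phi>'I y\<bar> powr p * f y)" .
    have "ennreal c * ennreal (\<bar>\<phi>I y\<bar> powr p * f y) + ennreal d * ennreal (Kfun f m y powr p * \<bar>\<phi>'I y\<bar> powr p * f y)
       = ennreal (c * (\<bar>\<phi>I y\<bar> powr p * f y) + d * (Kfun f m y powr p * \<bar>\<phi>'I y\<bar> powr p * f y))"
      using c_nn d_nn f_nn[of y] by (simp add: ennreal_mult'' ennreal_plus)
    then show ?thesis using R by (simp add: ennreal_leI)
  qed
  have S9: "A \<le> ennreal c * A + ennreal d * B"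
  proof -
    have "A \<le> (\<integral>\<^sup>+y. ennreal (gI y * (Kfun f m y * f y)) \<partial>lborel)" using S6 S7 by simp
    also have "\<dots> \<le> (\<integral>\<^sup>+y. ennreal c * ennreal (\<bar>\<phi>I y\<bar> powr p * f y) + ennreal d * ennreal (Kfun f m y powr p * \<bar>\<phi>'I y\<bar> powr p * f y) \<partial>lborel)"
      by (intro nn_integral_mono S8)
    also have "\<dots> = (\<integral>\<^sup>+y. ennreal c * ennreal (\<bar>\<phi>I y\<bar> powr p * f y) \<partial>lborel) + (\<integral>\<^sup>+y. ennreal d * ennreal (Kfun f m y powr p * \<bar>\<phi>'I y\<bar> powr p * f y) \<partial>lborel)"
      by (rule nn_integral_add) measurable
    also have "\<dots> = ennreal c * A + ennreal d * B"
      unfolding A_def B_def by (simp add: nn_integral_cmult)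
    finally show ?thesis .
  qed
  show ?thesis unfolding A_eq B_eq
  proof (cases "B = \<infinity>")
    case True
    have "p powr p > 0" using p by simp
    then show "A \<le> ennreal (p powr p) * B" using True by (simp add: ennreal_mult_top)
  next
    case False
    obtain Ar where Ar: "A = ennreal Ar" "0 \<le> Ar" using A_fin by (cases A) auto
    obtain Br where Br: "B = ennreal Br" "0 \<le> Br" using False by (cases B) auto
    have E: "ennreal Ar \<le> ennreal (c * Ar + d * Br)"
      using S9 c_nn d_nn Ar Br by (simp add: ennreal_mult'' ennreal_plus)
    have nn: "0 \<le> c * Ar + d * Br" using c_nn d_nn Ar Br by simp
    have le: "Ar \<le> c * Ar + d * Br" using ennreal_le_iff[OF nn] E by blast
    have pp: "p powr p = p * d"
    proof -
      have "p powr p = p powr (1 + (p - 1))" by simp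
      also have "\<dots> = p powr 1 * p powr (p - 1)" by (rule powr_add)
      finally show ?thesis unfolding d_def using p by simp
    qed
    have "Ar / p \<le> d * Br" using le p unfolding c_def by (simp add: field_simps)
    hence "Ar \<le> p powr p * Br" unfolding pp using p by (simp add: field_simps)
    hence "ennreal Ar \<le> ennreal (p powr p * Br)" by (rule ennreal_leI)
    also have "\<dots> = ennreal (p powr p) * ennreal Br" using Br by (simp add: ennreal_mult'')
    finally show "A \<le> ennreal (p powr p) * B" using Ar Br by simp
  qed
qed

end
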